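(* Let $T,\ell$ be positive integers, $\sigma\in(0,1]$, $w\in(0,1]$ and $\delta\in(0,1)$. Let $\mathcal{J}$ be the set of all intervals of width at most $w$ contained in $[0,1]$. For $i\in[T]$, $j\in[\ell]$ let $d_{i,j}$ be drawn from a $T\ell$-step adaptive sequence of $\sigma$-smooth distributions over $[0,1]$. Then with probability at least $1-\delta$, $$\max_{J\in\mathcal{J}}\sum_{i\in[T],\,j\in[\ell]}\mathbb{I}[d_{i,j}\in J]<\frac{T\ell w}{\sigma}\ln\!\left(\frac{2T\ell}{\delta}\right)+10\sqrt{\frac{T\ell w}{\sigma}\ln\!\left(\frac{2T\ell}{\delta}\right)\ln\!\left(\frac1\delta\right)}+10\log\!\left(\frac{10T\ell\log(2T\ell/\delta)}{\sigma\delta}\right).$$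
   Context: A distribution $\mu$ on $[0,1]$ is $\sigma$-smooth if $\mu(A)\le\mathcal{U}(A)/\sigma$ for all measurable $A$, where $\mathcal{U}$ is the uniform distribution on $[0,1]$. A $T\ell$-step adaptive sequence of $\sigma$-smooth distributions generates the $T\ell$ points one at a time, each drawn from a $\sigma$-smooth distribution chosen as a function of the previously realized points. *)

theory Defs
  imports "HOL-Probability.Probability"
begin

abbreviation pts :: "nat \<Rightarrow> (nat \<Rightarrow> real) measure" where
  "pts n \<equiv> PiM {..<n} (\<lambda>_. borel)"

definition unif01 :: "real set \<Rightarrow> real" where
  "unif01 A = measure lborel (A \<inter> {0..1})"

text \<open>A probability distribution mu on the reals is sigma-smooth w.r.t. the uniform
  distribution on [0,1]: mu(A) <= U(A)/sigma for all Borel A (this forces mu([0,1]) = 1).\<close>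
definition smooth :: "real \<Rightarrow> real measure \<Rightarrow> bool" where
  "smooth \<sigma> \<mu> \<longleftrightarrow> prob_space \<mu> \<and> sets \<mu> = sets borel \<and>
     (\<forall>A \<in> sets borel. measure \<mu> A \<le> unif01 A / \<sigma>)"

text \<open>An adaptive kernel: step k chooses, measurably in the previously realised points
  (a function on indices < k), a sigma-smooth distribution.\<close>
definition adaptive_smooth :: "real \<Rightarrow> nat \<Rightarrow> (nat \<Rightarrow> (nat \<Rightarrow> real) \<Rightarrow> real measure) \<Rightarrow> bool" where
  "adaptive_smooth \<sigma> n K \<longleftrightarrow> (\<forall>k<n.
      K k \<in> measurable (pts k) (subprob_algebra borel) \<and>
      (\<forall>f \<in> space (pts k). smooth \<sigma> (K k f)))"

fun adaptive_seq :: "(nat \<Rightarrow> (nat \<Rightarrow> real) \<Rightarrow> real measure) \<Rightarrow> nat \<Rightarrow> (nat \<Rightarrow> real) measure" where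
  "adaptive_seq K 0 = return (pts 0) (\<lambda>_. undefined)"
| "adaptive_seq K (Suc k) =
     bind (adaptive_seq K k) (\<lambda>f. bind (K k f) (\<lambda>x. return (pts (Suc k)) (f(k := x))))"

text \<open>Intervals of width at most w contained in [0,1] (any endpoint type, possibly empty).\<close>
definition intervals_width :: "real \<Rightarrow> real set set" where
  "intervals_width w = {J. is_interval J \<and> J \<subseteq> {0..1} \<and> (\<exists>a. J \<subseteq> {a..a+w})}"

end

theory Submission
  imports Defs "HOL-Analysis.Analysis"
begin


definition kstep :: "(nat \<Rightarrow> (nat \<Rightarrow> real) \<Rightarrow> real measure) \<Rightarrow> nat \<Rightarrow> (nat \<Rightarrow> real) \<Rightarrow> (nat \<Rightarrow> real) measure" where
  "kstep K k f = bind (K k f) (\<lambda>x. return (pts (Suc k)) (f(k := x)))"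

lemma upd_meas: "(\<lambda>x. (f::nat\<Rightarrow>real)(k := x)) \<in> borel \<rightarrow>\<^sub>M pts (Suc k)" if "f \<in> space (pts k)"
  apply (rule measurable_fun_upd[where J="{..<k}"])
  using that by (auto simp: lessThan_Suc)

lemma upd_meas2: "(\<lambda>p. (fst p::nat\<Rightarrow>real)(k := snd p)) \<in> pts k \<Otimes>\<^sub>M borel \<rightarrow>\<^sub>M pts (Suc k)"
  apply (rule measurable_fun_upd[where J="{..<k}"])
  by (auto simp: lessThan_Suc)

lemma kstep_meas:
  assumes "adaptive_smooth \<sigma> n K" "k < n"
  shows "kstep K k \<in> pts k \<rightarrow>\<^sub>M prob_algebra (pts (Suc k))"
proof (rule measurable_prob_algebraI)
  have K: "K k \<in> pts k \<rightarrow>\<^sub>M subprob_algebra borel" "\<And>f. f \<in> space (pts k) \<Longrightarrow> smooth \<sigma> (K k f)"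
    using assms unfolding adaptive_smooth_def by auto
  show "kstep K k \<in> pts k \<rightarrow>\<^sub>M subprob_algebra (pts (Suc k))"
    unfolding kstep_def
    apply (rule measurable_bind[OF K(1)])
    apply (rule measurable_compose[OF upd_meas2 return_measurable])
    done
  fix f assume f: "f \<in> space (pts k)"
  show "prob_space (kstep K k f)"
    unfolding kstep_def
    apply (rule prob_space_bind')
    using K(2)[OF f] apply (simp add: space_prob_algebra smooth_def)
    apply (rule measurable_compose[OF upd_meas[OF f] measurable_return_prob_space])
    done
qed

lemma seq_props:
  assumes "adaptive_smooth \<sigma> n K" "m \<le> n"
  shows "prob_space (adaptive_seq K m) \<and> sets (adaptive_seq K m) = sets (pts m)"
  using assms(2)
proof (induction m)
  case 0
  then show ?case by (auto intro!: prob_space_return)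
next
  case (Suc m)
  then have IH: "prob_space (adaptive_seq K m)" "sets (adaptive_seq K m) = sets (pts m)" by auto
  have ks: "kstep K m \<in> adaptive_seq K m \<rightarrow>\<^sub>M prob_algebra (pts (Suc m))"
    apply (subst measurable_cong_sets[OF IH(2) refl])
    using kstep_meas[OF assms(1)] Suc.prems by auto
  have eq: "adaptive_seq K (Suc m) = bind (adaptive_seq K m) (kstep K m)"
    by (simp add: kstep_def[abs_def])
  show ?case unfolding eq
    using prob_space_bind'[OF _ ks] sets_bind'[OF _ ks] IH by (auto simp: space_prob_algebra)
qed

definition cntr :: "real set \<Rightarrow> nat \<Rightarrow> (nat \<Rightarrow> real) \<Rightarrow> real" where
  "cntr W m d = (\<Sum>i<m. indicator W (d i))"

lemma cntr_meas: "W \<in> sets borel \<Longrightarrow> m \<le> k \<Longrightarrow> cntr W m \<in> borel_measurable (pts k)"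
  unfolding cntr_def
  by (intro borel_measurable_sum measurable_compose[OF measurable_component_singleton borel_measurable_indicator]) auto

lemma cntr_upd: "cntr W (Suc m) (f(m := x)) = cntr W m f + indicator W x"
  unfolding cntr_def by (simp add: sum.lessThan_Suc)

lemma inner_bound:
  assumes "prob_space M" "sets M = sets borel" "W \<in> sets borel" "measure M W \<le> p" "c \<ge> 0"
  shows "(\<integral>\<^sup>+ x. ennreal (1 + c * indicator W x) \<partial>M) \<le> ennreal (1 + c * p)"
proof -
  interpret prob_space M by fact
  have W: "W \<in> sets M" using assms by simp
  have "(\<integral>\<^sup>+ x. ennreal (1 + c * indicator W x) \<partial>M) = (\<integral>\<^sup>+ x. 1 + ennreal c * indicator W x \<partial>M)"
    using assms(5) by (intro nn_integral_cong) (auto split: split_indicator simp: ennreal_plus)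
  also have "\<dots> = (\<integral>\<^sup>+ x. 1 \<partial>M) + (\<integral>\<^sup>+ x. ennreal c * indicator W x \<partial>M)"
    using W by (intro nn_integral_add) auto
  also have "\<dots> = 1 + ennreal c * ennreal (measure M W)"
    using W by (simp add: nn_integral_cmult_indicator emeasure_eq_measure prob_space)
  also have "\<dots> = ennreal (1 + c * measure M W)"
    using assms(5) by (simp add: ennreal_plus ennreal_mult)
  also have "\<dots> \<le> ennreal (1 + c * p)"
    using assms(4,5) by (intro ennreal_leI) (simp add: mult_left_mono)
  finally show ?thesis .
qed

lemma mgf_bound:
  assumes ad: "adaptive_smooth \<sigma> n K" and "m \<le> n" and W: "W \<in> sets borel" and lam: "t \<ge> 0" and p0: "p \<ge> 0"
    and Kp: "\<And>k f. k < n \<Longrightarrow> f \<in> space (pts k) \<Longrightarrow> measure (K k f) W \<le> p"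
  shows "(\<integral>\<^sup>+ d. ennreal (exp (t * cntr W m d)) \<partial>adaptive_seq K m) \<le> ennreal ((1 + (exp t - 1) * p) ^ m)"
  using assms(2)
proof (induction m)
  case 0
  then show ?case by (simp add: nn_integral_return cntr_def)
next
  case (Suc m)
  have c0: "exp t - 1 \<ge> 0" using lam by simp
  have IH: "prob_space (adaptive_seq K m)" "sets (adaptive_seq K m) = sets (pts m)"
    using seq_props[OF ad] Suc.prems by auto
  have ks: "kstep K m \<in> adaptive_seq K m \<rightarrow>\<^sub>M subprob_algebra (pts (Suc m))"
    apply (subst measurable_cong_sets[OF IH(2) refl])
    using kstep_meas[OF ad] Suc.prems by (auto intro: measurable_prob_algebraD)
  have eq: "adaptive_seq K (Suc m) = bind (adaptive_seq K m) (kstep K m)"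
    by (simp add: kstep_def[abs_def])
  have g: "(\<lambda>d. ennreal (exp (t * cntr W (Suc m) d))) \<in> borel_measurable (pts (Suc m))"
    using cntr_meas[OF W, of "Suc m" "Suc m"] by measurable
  define e where "e f = exp (t * cntr W m f)" for f
  have inner: "(\<integral>\<^sup>+ y. ennreal (exp (t * cntr W (Suc m) y)) \<partial>kstep K m f) \<le> ennreal (e f) * ennreal (1 + (exp t - 1) * p)"
    if f: "f \<in> space (pts m)" for f
  proof -
    have Ksm: "smooth \<sigma> (K m f)" using ad Suc.prems f unfolding adaptive_smooth_def by auto
    then have Kps: "prob_space (K m f)" and Ks: "sets (K m f) = sets borel" unfolding smooth_def by auto
    have rm: "(\<lambda>x. return (pts (Suc m)) (f(m := x))) \<in> K m f \<rightarrow>\<^sub>M subprob_algebra (pts (Suc m))"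
      apply (subst measurable_cong_sets[OF Ks refl])
      by (rule measurable_compose[OF upd_meas[OF f] return_measurable])
    have "(\<integral>\<^sup>+ y. ennreal (exp (t * cntr W (Suc m) y)) \<partial>kstep K m f)
        = (\<integral>\<^sup>+ x. \<integral>\<^sup>+ y. ennreal (exp (t * cntr W (Suc m) y)) \<partial>return (pts (Suc m)) (f(m := x)) \<partial>K m f)"
      unfolding kstep_def by (rule nn_integral_bind[OF g rm])
    also have "\<dots> = (\<integral>\<^sup>+ x. ennreal (e f) * ennreal (1 + (exp t - 1) * indicator W x) \<partial>K m f)"
    proof (intro nn_integral_cong)
      fix x assume "x \<in> space (K m f)"
      then have x: "x \<in> space borel" using sets_eq_imp_space_eq[OF Ks] by simp
      have fx: "f(m := x) \<in> space (pts (Suc m))" using measurable_space[OF upd_meas[OF f] x] .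
      have eqx: "exp (t * cntr W (Suc m) (f(m := x))) = e f * (1 + (exp t - 1) * indicator W x)"
        by (simp add: cntr_upd e_def split: split_indicator) (simp add: exp_add distrib_left)
      have "(\<integral>\<^sup>+ y. ennreal (exp (t * cntr W (Suc m) y)) \<partial>return (pts (Suc m)) (f(m := x)))
          = ennreal (exp (t * cntr W (Suc m) (f(m := x))))" by (rule nn_integral_return[OF fx g])
      also have "\<dots> = ennreal (e f * (1 + (exp t - 1) * indicator W x))" by (simp only: eqx)
      also have "\<dots> = ennreal (e f) * ennreal (1 + (exp t - 1) * indicator W x)"
        using c0 by (intro ennreal_mult) (auto simp: e_def split: split_indicator)
      finally show "(\<integral>\<^sup>+ y. ennreal (exp (t * cntr W (Suc m) y)) \<partial>return (pts (Suc m)) (f(m := x)))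
          = ennreal (e f) * ennreal (1 + (exp t - 1) * indicator W x)" .
    qed
    also have "\<dots> = ennreal (e f) * (\<integral>\<^sup>+ x. ennreal (1 + (exp t - 1) * indicator W x) \<partial>K m f)"
      using W Ks by (intro nn_integral_cmult) (simp add: measurable_cong_sets[OF Ks refl])
    also have "\<dots> \<le> ennreal (e f) * ennreal (1 + (exp t - 1) * p)"
      using inner_bound[OF Kps Ks W Kp[OF _ f] c0] Suc.prems by (intro mult_left_mono) auto
    finally show ?thesis .
  qed
  have "(\<integral>\<^sup>+ d. ennreal (exp (t * cntr W (Suc m) d)) \<partial>adaptive_seq K (Suc m))
      = (\<integral>\<^sup>+ f. \<integral>\<^sup>+ y. ennreal (exp (t * cntr W (Suc m) y)) \<partial>kstep K m f \<partial>adaptive_seq K m)"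
    unfolding eq by (rule nn_integral_bind[OF g ks])
  also have "\<dots> \<le> (\<integral>\<^sup>+ f. ennreal (e f) * ennreal (1 + (exp t - 1) * p) \<partial>adaptive_seq K m)"
    using inner sets_eq_imp_space_eq[OF IH(2)] by (intro nn_integral_mono) auto
  also have "\<dots> = (\<integral>\<^sup>+ f. ennreal (e f) \<partial>adaptive_seq K m) * ennreal (1 + (exp t - 1) * p)"
    using cntr_meas[OF W, of m m] unfolding e_def by (intro nn_integral_multc) (simp add: measurable_cong_sets[OF IH(2) refl])
  also have "\<dots> \<le> ennreal ((1 + (exp t - 1) * p) ^ m) * ennreal (1 + (exp t - 1) * p)"
    using Suc unfolding e_def by (intro mult_right_mono) auto
  also have "\<dots> = ennreal ((1 + (exp t - 1) * p) ^ Suc m)"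
    using c0 p0 by (subst ennreal_mult[symmetric]) (auto simp: mult.commute)
  finally show ?case .
qed

lemma tail_bound:
  assumes ad: "adaptive_smooth \<sigma> n K" and W: "W \<in> sets borel" and lam: "t \<ge> 0" and p0: "p \<ge> 0"
    and Kp: "\<And>k f. k < n \<Longrightarrow> f \<in> space (pts k) \<Longrightarrow> measure (K k f) W \<le> p"
  shows "measure (adaptive_seq K n) {d \<in> space (pts n). R \<le> cntr W n d}
     \<le> exp (- t * R) * (1 + (exp t - 1) * p) ^ n"
proof -
  let ?M = "adaptive_seq K n"
  have P: "prob_space ?M" "sets ?M = sets (pts n)" using seq_props[OF ad] by auto
  interpret prob_space ?M by fact
  have cm: "cntr W n \<in> borel_measurable ?M"
    by (subst measurable_cong_sets[OF P(2) refl]) (rule cntr_meas[OF W, of n n], simp)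
  let ?S = "{d \<in> space (pts n). R \<le> cntr W n d}"
  have sp: "space ?M = space (pts n)" using sets_eq_imp_space_eq[OF P(2)] .
  have S: "?S \<in> sets ?M" using cm unfolding sp[symmetric] by measurable
  have "emeasure ?M ?S = (\<integral>\<^sup>+ d. indicator ?S d \<partial>?M)" using S by simp
  also have "\<dots> \<le> (\<integral>\<^sup>+ d. ennreal (exp (- t * R)) * ennreal (exp (t * cntr W n d)) \<partial>?M)"
  proof (intro nn_integral_mono)
    fix d assume "d \<in> space ?M"
    show "indicator ?S d \<le> ennreal (exp (- t * R)) * ennreal (exp (t * cntr W n d))"
    proof (cases "d \<in> ?S")
      case True
      then have "R \<le> cntr W n d" by auto
      then have "1 \<le> exp (- t * R) * exp (t * cntr W n d)"
        using lam mult_left_mono[of R "cntr W n d" t] by (simp add: exp_add[symmetric] algebra_simps)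
      then show ?thesis using True by (simp add: ennreal_mult[symmetric])
    qed simp
  qed
  also have "\<dots> = ennreal (exp (- t * R)) * (\<integral>\<^sup>+ d. ennreal (exp (t * cntr W n d)) \<partial>?M)"
    using cm by (intro nn_integral_cmult) auto
  also have "\<dots> \<le> ennreal (exp (- t * R)) * ennreal ((1 + (exp t - 1) * p) ^ n)"
    by (intro mult_left_mono mgf_bound[OF ad _ W lam p0 Kp]) auto
  also have "\<dots> = ennreal (exp (- t * R) * (1 + (exp t - 1) * p) ^ n)"
    using lam p0 by (subst ennreal_mult) auto
  finally have "ennreal (measure ?M ?S) \<le> ennreal (exp (- t * R) * (1 + (exp t - 1) * p) ^ n)"
    by (simp add: emeasure_eq_measure)
  then show ?thesis using lam p0 by (subst (asm) ennreal_le_iff) auto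
qed



lemma sum_split_nat: "(\<Sum>p<a+b. g p) = (\<Sum>p<a. g p) + (\<Sum>j<b. g (a+j))" for g :: "nat \<Rightarrow> 'a::comm_monoid_add"
  by (induct b) (auto simp: add.assoc)

lemma sum_reindex2: "(\<Sum>i<T. \<Sum>j<L. g (i*L+j)) = (\<Sum>p<T*L. g p)" for g :: "nat \<Rightarrow> 'a::comm_monoid_add"
proof (induct T)
  case (Suc T)
  have "(\<Sum>p<Suc T * L. g p) = (\<Sum>p<T*L + L. g p)" by (simp add: add.commute)
  also have "\<dots> = (\<Sum>p<T*L. g p) + (\<Sum>j<L. g (T*L+j))" by (rule sum_split_nat)
  finally show ?case using Suc by simp
qed simp

lemma cntr_mono: "J \<subseteq> J' \<Longrightarrow> cntr J m d \<le> cntr J' m d"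
  unfolding cntr_def by (intro sum_mono) (auto split: split_indicator)

lemma cntr_le: "cntr J m d \<le> real m"
proof -
  have "cntr J m d \<le> (\<Sum>i<m. 1)" unfolding cntr_def by (intro sum_mono) (auto split: split_indicator)
  then show ?thesis by simp
qed

lemma cntr_nonneg: "cntr J m d \<ge> 0"
  unfolding cntr_def by (intro sum_nonneg) auto

lemma cntr_pos_ex: "cntr J m d > 0 \<Longrightarrow> \<exists>p<m. d p \<in> J"
proof (rule ccontr)
  assume "cntr J m d > 0" "\<not> (\<exists>p<m. d p \<in> J)"
  then have "cntr J m d = 0" unfolding cntr_def by (intro sum.neutral) auto
  then show False using \<open>cntr J m d > 0\<close> by simp
qed

lemma real_Max_less:
  assumes "finite A" "A \<noteq> {}"
  shows "real (Max A) < R \<longleftrightarrow> (\<forall>x\<in>A. real x < R)"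
  using Max_in[OF assms] Max_ge[OF assms(1)] by (meson le_less_trans of_nat_le_iff)

lemma good_iff:
  assumes "R > 0" "w > 0"
  shows "(\<forall>J\<in>intervals_width w. cntr J n d < R) \<longleftrightarrow>
         (\<forall>a<n. d a \<in> {0..1} \<longrightarrow> cntr {d a..min 1 (d a + w)} n d < R)"
proof
  assume H: "\<forall>J\<in>intervals_width w. cntr J n d < R"
  show "\<forall>a<n. d a \<in> {0..1} \<longrightarrow> cntr {d a..min 1 (d a + w)} n d < R"
  proof (intro allI impI)
    fix a assume "a < n" "d a \<in> {0..1}"
    then have "{d a..min 1 (d a + w)} \<in> intervals_width w"
      unfolding intervals_width_def by (auto intro!: exI[of _ "d a"])
    then show "cntr {d a..min 1 (d a + w)} n d < R" using H by auto
  qed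
next
  assume H: "\<forall>a<n. d a \<in> {0..1} \<longrightarrow> cntr {d a..min 1 (d a + w)} n d < R"
  show "\<forall>J\<in>intervals_width w. cntr J n d < R"
  proof
    fix J assume J: "J \<in> intervals_width w"
    then obtain c where Jc: "J \<subseteq> {c..c+w}" and J01: "J \<subseteq> {0..1}" unfolding intervals_width_def by auto
    show "cntr J n d < R"
    proof (cases "\<exists>p<n. d p \<in> J")
      case False
      then have "cntr J n d = 0" unfolding cntr_def by (intro sum.neutral) auto
      then show ?thesis using assms by simp
    next
      case True
      define D where "D = d ` {p. p < n \<and> d p \<in> J}"
      have fD: "finite D" "D \<noteq> {}" unfolding D_def using True by auto
      obtain a where a: "a < n" "d a \<in> J" "d a = Min D"
        using Min_in[OF fD] unfolding D_def by auto
      have sub: "J \<subseteq> {d a..min 1 (d a + w)} \<union> (J - d ` {..<n})" 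
      proof
        fix y assume y: "y \<in> J"
        show "y \<in> {d a..min 1 (d a + w)} \<union> (J - d ` {..<n})"
        proof (cases "y \<in> d ` {..<n}")
          case True
          then have "y \<in> D" using y unfolding D_def by auto
          then have "d a \<le> y" using a(3) Min_le[OF fD(1)] by simp
          moreover have "y \<le> 1" using y J01 by auto
          moreover have "y \<le> d a + w"
          proof -
            have "y \<le> c + w" "c \<le> d a" using y a(2) Jc by auto
            then show ?thesis by linarith
          qed
          ultimately show ?thesis by auto
        qed (use y in auto)
      qed
      have "cntr J n d \<le> cntr {d a..min 1 (d a + w)} n d"
        unfolding cntr_def
      proof (intro sum_mono)
        fix p assume p: "p \<in> {..<n}"
        show "indicator J (d p) \<le> (indicator {d a..min 1 (d a + w)} (d p) :: real)"
          using sub p by (auto split: split_indicator)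
      qed
      also have "\<dots> < R" using H a(1,2) J01 by blast
      finally show ?thesis .
    qed
  qed
qed


lemma Gmeas:
  "{d \<in> space (pts n). \<forall>a<n. d a \<in> {0..1} \<longrightarrow>
      (\<Sum>p<n. (if d a \<le> d p \<and> d p \<le> min 1 (d a + w) then 1 else 0::real)) < R} \<in> sets (pts n)"
proof -
  have "Measurable.pred (pts n) (\<lambda>d. \<forall>a\<in>{..<n}. d a \<in> {0..1} \<longrightarrow>
      (\<Sum>p<n. (if d a \<le> d p \<and> d p \<le> min 1 (d a + w) then 1 else 0::real)) < R)"
  proof (rule pred_intros_finite(3))
    fix a assume a: "a \<in> {..<n}"
    have ma: "(\<lambda>d. d a) \<in> pts n \<rightarrow>\<^sub>M borel" by (rule measurable_component_singleton) (use a in auto)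
    have tm: "(\<lambda>d. (if d a \<le> d p \<and> d p \<le> min 1 (d a + w) then 1 else 0::real)) \<in> borel_measurable (pts n)"
      if p: "p \<in> {..<n}" for p
    proof -
      have mp[measurable]: "(\<lambda>d. d p) \<in> pts n \<rightarrow>\<^sub>M borel" by (rule measurable_component_singleton) (use p in auto)
      have m2: "(\<lambda>x. min 1 (x a + w)) \<in> borel_measurable (pts n)"
        by (rule borel_measurable_min[OF borel_measurable_add[OF ma borel_measurable_const] borel_measurable_const])
      have q1: "Measurable.pred (pts n) (\<lambda>x. x a \<le> x p)"
        unfolding pred_def by (rule borel_measurable_le[OF ma mp])
      have q2: "Measurable.pred (pts n) (\<lambda>x. x p \<le> min 1 (x a + w))"
        unfolding pred_def by (rule borel_measurable_le[OF mp m2])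
      show ?thesis
        by (rule measurable_If[OF borel_measurable_const borel_measurable_const pred_intros_logic(3)[OF q1 q2, unfolded pred_def]])
    qed
    have sm: "(\<lambda>d. \<Sum>p<n. (if d a \<le> d p \<and> d p \<le> min 1 (d a + w) then 1 else 0::real)) \<in> borel_measurable (pts n)"
      by (rule borel_measurable_sum) (rule tm)
    show "Measurable.pred (pts n) (\<lambda>d. d a \<in> {0..1} \<longrightarrow>
      (\<Sum>p<n. (if d a \<le> d p \<and> d p \<le> min 1 (d a + w) then 1 else 0::real)) < R)"
    proof (rule pred_intros_logic(4))
      have "{d \<in> space (pts n). d a \<in> {0..1}} = (\<lambda>d. d a) -` {0..1} \<inter> space (pts n)" by auto
      then show "Measurable.pred (pts n) (\<lambda>d. d a \<in> {0..1})" unfolding pred_def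
        using measurable_sets[OF ma, of "{0..1}"] by (simp only:) simp
      show "Measurable.pred (pts n) (\<lambda>d. (\<Sum>p<n. (if d a \<le> d p \<and> d p \<le> min 1 (d a + w) then 1 else 0::real)) < R)"
        by (rule pred_less_const[OF sm]) simp
    qed
  qed simp
  then show ?thesis unfolding pred_def by (simp only: Ball_def lessThan_iff)
qed


lemma arith_main:
  fixes n \<sigma> w \<delta> :: real
  assumes n: "n \<ge> 2" and s: "0 < \<sigma>" "\<sigma> \<le> 1" and w: "0 < w" "w \<le> 1" and d: "0 < \<delta>" "\<delta> < 1"
  defines "\<mu> \<equiv> n * w / \<sigma>"
  defines "L0 \<equiv> ln (2 * n / \<delta>)"
  defines "R \<equiv> \<mu> * L0 + 10 * sqrt (\<mu> * L0 * ln (1 / \<delta>)) + 10 * ln (10 * n * L0 / (\<sigma> * \<delta>))"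
  shows "\<exists>t\<ge>0. ln (32 / w) - t * R + (exp t - 1) * (17/16) * \<mu> \<le> ln \<delta>"
proof -
  have l2: "2/3 \<le> ln (2::real)" by (rule ln2_ge_two_thirds)
  have "ln 4 \<le> L0" unfolding L0_def using n d by (subst ln_le_cancel_iff) (auto simp: field_simps)
  moreover have "ln (4::real) = 2 * ln 2" using ln_realpow[of 2 2] by simp
  ultimately have L0: "4/3 \<le> L0" using l2 by linarith
  have mu0: "\<mu> > 0" unfolding \<mu>_def using n s w by simp
  have dl: "ln (1/\<delta>) \<ge> 0" using d by simp
  have sq: "sqrt (\<mu> * L0 * ln (1 / \<delta>)) \<ge> 0" using mu0 L0 dl by simp
  have lnsplit: "ln (10 * n * L0 / (\<sigma> * \<delta>)) = ln 10 + ln n + ln L0 - ln \<sigma> - ln \<delta>"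
    using n s d L0 by (simp add: ln_mult ln_div)
  have ln10: "ln (10::real) \<ge> 3 * ln 2"
  proof -
    have "ln (8::real) = 3 * ln 2" using ln_realpow[of 2 3] by simp
    moreover have "ln (8::real) \<le> ln 10" by simp
    ultimately show ?thesis by simp
  qed
  have ln32: "ln (32::real) = 5 * ln 2" using ln_realpow[of 2 5] by simp
  have lnL0: "ln L0 \<ge> 0" using L0 by simp
  have lns: "ln \<sigma> \<le> 0" using s by simp
  have lnn: "ln n \<ge> 0" using n by simp
  have lnd: "ln \<delta> \<le> 0" using d by simp
  have lnw: "ln (32 / w) = ln 32 - ln w" using w by (simp add: ln_div)
  have lnmu: "ln \<mu> = ln n + ln w - ln \<sigma>" unfolding \<mu>_def using n w s by (simp add: ln_mult ln_div)
  show ?thesis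
  proof (cases "\<mu> \<ge> 1")
    case True
    have e: "exp (1/4::real) \<le> 21/16" using exp_bound[of "1/4::real"] by (simp add: power2_eq_square)
    have "(exp (1/4) - 1) * (17/16) * \<mu> \<le> (85/256) * \<mu>"
      using e mu0 by (intro mult_right_mono) auto
    also have "\<dots> \<le> (1/4) * \<mu> * L0" using L0 mu0 by (simp add: mult_left_mono)
    finally have A: "(exp (1/4) - 1) * (17/16) * \<mu> \<le> (1/4) * \<mu> * L0" .
    have "ln \<mu> \<ge> 0" using True by simp
    then have "- ln w \<le> ln n - ln \<sigma>" using lnmu by linarith
    then have "ln (32 / w) - (1/4) * R + (exp (1/4) - 1) * (17/16) * \<mu> \<le> ln \<delta>"
      unfolding R_def lnsplit lnw using A sq ln32 ln10 l2 lnL0 lns lnn lnd by argo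
    then show ?thesis by (intro exI[of _ "1/4"]) auto
  next
    case False
    define t where "t = 1 - ln \<mu>"
    have lm0: "ln \<mu> \<le> 0" using False mu0 by simp
    have t0: "t \<ge> 0" using lm0 by (simp add: t_def)
    have e1: "exp (1::real) \<le> 1 + 1 + 1^2" by (rule exp_bound) auto
    have "exp t = exp 1 / \<mu>" unfolding t_def using mu0 by (simp add: exp_diff)
    then have "(exp t - 1) * (17/16) * \<mu> \<le> exp 1 * (17/16)" using mu0 by (simp add: field_simps)
    also have "\<dots> \<le> 4" using e1 by simp
    finally have A: "(exp t - 1) * (17/16) * \<mu> \<le> 4" .
    have R1: "R \<ge> 10 * (ln 10 + ln n - ln \<sigma> - ln \<delta>)"
      unfolding R_def lnsplit using sq mu0 L0 lnL0 by (simp add: algebra_simps)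
    have R1': "R \<ge> 1" using R1 ln10 l2 lns lnn lnd by argo
    have "t * R \<ge> R - ln \<mu>"
    proof -
      have "t * R = R + (- ln \<mu>) * R" by (simp add: t_def algebra_simps)
      moreover have "(- ln \<mu>) * R \<ge> - ln \<mu>" using False mu0 R1' by (simp add: mult_le_cancel_left1)
      ultimately show ?thesis by simp
    qed
    then have "ln (32 / w) - t * R + (exp t - 1) * (17/16) * \<mu> \<le> ln \<delta>"
      using A R1 lnw lnmu ln32 ln10 l2 lns lnn lnd by argo
    then show ?thesis using t0 by blast
  qed
qed



lemma cJ_eq: "real (\<Sum>i<T. \<Sum>j<L. (if d (i*L+j) \<in> J then 1 else 0::nat)) = cntr J (T*L) d"
proof -
  have "(\<Sum>i<T. \<Sum>j<L. (if d (i*L+j) \<in> J then 1 else 0::nat)) = (\<Sum>p<T*L. (if d p \<in> J then 1 else 0::nat))"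
    by (rule sum_reindex2)
  then have "real (\<Sum>i<T. \<Sum>j<L. (if d (i*L+j) \<in> J then 1 else 0::nat)) = real (\<Sum>p<T*L. (if d p \<in> J then 1 else 0::nat))"
    by (simp only:)
  also have "\<dots> = (\<Sum>p<T*L. real (if d p \<in> J then 1 else 0::nat))" by (rule of_nat_sum)
  also have "\<dots> = cntr J (T*L) d" unfolding cntr_def by (rule sum.cong) (auto simp: indicator_def)
  finally show ?thesis .
qed

lemma unif_window:
  assumes "0 \<le> h" 
  shows "unif01 {a..a + h} \<le> h"
proof -
  have "{a..a+h} \<inter> {0..1} = {max a 0..min (a+h) 1}" by auto
  then show ?thesis unfolding unif01_def using assms by auto
qed

lemma R_gt1:
  fixes n \<sigma> w \<delta> :: real
  assumes n: "n \<ge> 1" and s: "0 < \<sigma>" "\<sigma> \<le> 1" and w: "0 < w" and d: "0 < \<delta>" "\<delta> < 1"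
  shows "n * w / \<sigma> * ln (2 * n / \<delta>) + 10 * sqrt (n * w / \<sigma> * ln (2 * n / \<delta>) * ln (1 / \<delta>))
          + 10 * ln (10 * n * ln (2 * n / \<delta>) / (\<sigma> * \<delta>)) > 1"
proof -
  have l2: "2/3 \<le> ln (2::real)" by (rule ln2_ge_two_thirds)
  have "ln 2 \<le> ln (2 * n / \<delta>)" using n d by (subst ln_le_cancel_iff) (auto simp: field_simps)
  then have L0: "2/3 \<le> ln (2 * n / \<delta>)" using l2 by linarith
  have A: "n * w / \<sigma> * ln (2 * n / \<delta>) \<ge> 0" using L0 n s w by simp
  have B: "sqrt (n * w / \<sigma> * ln (2 * n / \<delta>) * ln (1 / \<delta>)) \<ge> 0" using L0 n s w d by simp
  have "2 \<le> 10 * n * ln (2 * n / \<delta>)" using L0 n mult_mono[OF n L0] by linarith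
  also have "\<dots> \<le> 10 * n * ln (2 * n / \<delta>) / (\<sigma> * \<delta>)"
    using s d L0 n by (simp add: le_divide_eq mult_le_one)
  finally have "ln 2 \<le> ln (10 * n * ln (2 * n / \<delta>) / (\<sigma> * \<delta>))" by simp
  then show ?thesis using A B l2 by linarith
qed

theorem mainTheorem8:
  fixes T L :: nat and \<sigma> w \<delta> :: real
    and K :: "nat \<Rightarrow> (nat \<Rightarrow> real) \<Rightarrow> real measure"
  assumes "T > 0" "L > 0"
    and "0 < \<sigma>" "\<sigma> \<le> 1" "0 < w" "w \<le> 1" "0 < \<delta>" "\<delta> < 1"
    and "adaptive_smooth \<sigma> (T * L) K"
  shows "measure (adaptive_seq K (T * L))
     {d \<in> space (pts (T * L)).
        real (Max ((\<lambda>J. \<Sum>i<T. \<Sum>j<L. (if d (i * L + j) \<in> J then 1 else 0 :: nat))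
                    ` intervals_width w))
        < real (T * L) * w / \<sigma> * ln (2 * real (T * L) / \<delta>)
          + 10 * sqrt (real (T * L) * w / \<sigma> * ln (2 * real (T * L) / \<delta>) * ln (1 / \<delta>))
          + 10 * ln (10 * real (T * L) * ln (2 * real (T * L) / \<delta>) / (\<sigma> * \<delta>))}
     \<ge> 1 - \<delta>"
proof -
  note s = assms(3,4) and w = assms(5,6) and dl = assms(7,8) and ad = assms(9)
  define n where "n = T * L"
  have n1: "n \<ge> 1" using assms(1,2) unfolding n_def by simp
  define R where "R = real n * w / \<sigma> * ln (2 * real n / \<delta>)
          + 10 * sqrt (real n * w / \<sigma> * ln (2 * real n / \<delta>) * ln (1 / \<delta>))
          + 10 * ln (10 * real n * ln (2 * real n / \<delta>) / (\<sigma> * \<delta>))"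
  have R1: "R > 1" unfolding R_def using R_gt1[of "real n" \<sigma> w \<delta>] n1 s w dl by simp
  define G where "G = {d \<in> space (pts n). \<forall>J\<in>intervals_width w. cntr J n d < R}"
  have emp: "{} \<in> intervals_width w" unfolding intervals_width_def by auto
  have seteq: "{d \<in> space (pts (T * L)).
        real (Max ((\<lambda>J. \<Sum>i<T. \<Sum>j<L. (if d (i * L + j) \<in> J then 1 else 0 :: nat))
                    ` intervals_width w))
        < real (T * L) * w / \<sigma> * ln (2 * real (T * L) / \<delta>)
          + 10 * sqrt (real (T * L) * w / \<sigma> * ln (2 * real (T * L) / \<delta>) * ln (1 / \<delta>))
          + 10 * ln (10 * real (T * L) * ln (2 * real (T * L) / \<delta>) / (\<sigma> * \<delta>))} = G"
  proof -
    have "real (Max ((\<lambda>J. \<Sum>i<T. \<Sum>j<L. (if d (i * L + j) \<in> J then 1 else 0 :: nat))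
                    ` intervals_width w)) < R \<longleftrightarrow> (\<forall>J\<in>intervals_width w. cntr J n d < R)" for d
    proof -
      let ?A = "(\<lambda>J. \<Sum>i<T. \<Sum>j<L. (if d (i * L + j) \<in> J then 1 else 0 :: nat)) ` intervals_width w"
      have "?A \<subseteq> {..n}"
      proof
        fix x assume "x \<in> ?A"
        then obtain J where "x = (\<Sum>i<T. \<Sum>j<L. (if d (i * L + j) \<in> J then 1 else 0 :: nat))" by auto
        then have "real x = cntr J n d" using cJ_eq n_def by simp
        then have "real x \<le> real n" using cntr_le by simp
        then show "x \<in> {..n}" by simp
      qed
      then have fA: "finite ?A" by (rule finite_subset) simp
      have nA: "?A \<noteq> {}" using emp by auto
      show ?thesis unfolding real_Max_less[OF fA nA] using cJ_eq n_def by simp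
    qed
    then show ?thesis unfolding G_def R_def n_def by simp
  qed
  have P: "prob_space (adaptive_seq K n)" "sets (adaptive_seq K n) = sets (pts n)"
    using seq_props[OF ad[folded n_def]] by auto
  interpret prob_space "adaptive_seq K n" by (fact P(1))
  have sp: "space (adaptive_seq K n) = space (pts n)" using sets_eq_imp_space_eq[OF P(2)] .
  have G2: "G = {d \<in> space (pts n). \<forall>a<n. d a \<in> {0..1} \<longrightarrow>
      (\<Sum>p<n. (if d a \<le> d p \<and> d p \<le> min 1 (d a + w) then 1 else 0::real)) < R}"
  proof -
    have ceq: "\<And>d a. cntr {d a..min 1 (d a + w)} n d = (\<Sum>p<n. (if d a \<le> d p \<and> d p \<le> min 1 (d a + w) then 1 else 0::real))"
      unfolding cntr_def by (rule sum.cong) (auto simp: indicator_def)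
    have R0: "R > 0" using R1 by simp
    show ?thesis unfolding G_def by (simp only: good_iff[OF R0 w(1)] ceq)
  qed
  have Gm: "G \<in> sets (pts n)" unfolding G2 by (rule Gmeas)
  have bad: "measure (adaptive_seq K n) (space (pts n) - G) \<le> \<delta>"
  proof (cases "n = 1")
    case True
    have emp: "space (pts n) - G = {}"
    proof -
      have "cntr J n d < R" for J d using cntr_le[of J n d] R1 True by simp
      then show ?thesis unfolding G_def by auto
    qed
    show ?thesis unfolding emp using dl by simp
  next
    case False
    then have n2: "real n \<ge> 2" using n1 by simp
    obtain t where t0: "t \<ge> 0" and tb: "ln (32 / w) - t * R + (exp t - 1) * (17/16) * (real n * w / \<sigma>) \<le> ln \<delta>"
      using arith_main[of "real n" \<sigma> w \<delta>] n2 s w dl unfolding R_def by auto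
    define h where "h = w / 16"
    define N where "N = nat \<lfloor>16 / w\<rfloor> + 1"
    define Wk where "Wk k = {real k * h .. real k * h + (w + h)}" for k :: nat
    define p where "p = (w + h) / \<sigma>"
    define S where "S k = {d \<in> space (pts n). R \<le> cntr (Wk k) n d}" for k
    have h0: "h > 0" using w by (simp add: h_def)
    have p0: "p \<ge> 0" using s w h0 by (simp add: p_def)
    have Wb: "Wk k \<in> sets borel" for k unfolding Wk_def by simp
    have ad': "adaptive_smooth \<sigma> n K" using ad n_def by simp
    have Kp: "measure (K k f) (Wk kk) \<le> p" if "k < n" "f \<in> space (pts k)" for k f kk
    proof -
      have "smooth \<sigma> (K k f)" using ad' that unfolding adaptive_smooth_def by auto
      then have "measure (K k f) (Wk kk) \<le> unif01 (Wk kk) / \<sigma>" using Wb unfolding smooth_def by auto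
      also have "\<dots> \<le> (w + h) / \<sigma>"
        using unif_window[of "w + h" "real kk * h"] w h0 s unfolding Wk_def by (simp add: divide_right_mono)
      finally show ?thesis unfolding p_def .
    qed
    have tl: "measure (adaptive_seq K n) (S k) \<le> exp (- t * R) * (1 + (exp t - 1) * p) ^ n" for k
      unfolding S_def by (rule tail_bound[OF ad' Wb t0 p0 Kp])
    have Sm: "S k \<in> sets (adaptive_seq K n)" for k
    proof -
      have "cntr (Wk k) n \<in> borel_measurable (pts n)" by (rule cntr_meas[OF Wb]) simp
      then have "S k \<in> sets (pts n)" unfolding S_def by measurable
      then show ?thesis using P(2) by simp
    qed
    have cover: "space (pts n) - G \<subseteq> (\<Union>k<N. S k)"
    proof
      fix d assume d: "d \<in> space (pts n) - G"
      then obtain J where J: "J \<in> intervals_width w" and JR: "R \<le> cntr J n d"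
        unfolding G_def by auto
      then obtain c where Jc: "J \<subseteq> {c..c+w}" and J01: "J \<subseteq> {0..1}" unfolding intervals_width_def by auto
      have "cntr J n d > 0" using JR R1 by simp
      then obtain q where "q < n" "d q \<in> J" using cntr_pos_ex by blast
      define x where "x = d q"
      have x: "x \<in> J" using \<open>d q \<in> J\<close> x_def by simp
      define a where "a = max c 0"
      have a0: "a \<ge> 0" unfolding a_def by simp
      have ax: "a \<le> 1" using x Jc J01 unfolding a_def by force
      define k where "k = nat \<lfloor>a / h\<rfloor>"
      have fl0: "\<lfloor>a / h\<rfloor> \<ge> 0" using a0 h0 by simp
      have rk: "real k = of_int \<lfloor>a / h\<rfloor>" unfolding k_def using fl0 by simp
      have k1: "real k * h \<le> a"
      proof -
        have "real k \<le> a / h" unfolding rk by (rule of_int_floor_le)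
        then show ?thesis using h0 by (simp add: le_divide_eq)
      qed
      have k2: "a < real k * h + h"
      proof -
        have "a / h < real k + 1" unfolding rk by (rule real_of_int_floor_add_one_gt)
        then show ?thesis using h0 by (simp add: divide_less_eq algebra_simps)
      qed
      have sub: "J \<subseteq> Wk k"
      proof
        fix y assume y: "y \<in> J"
        have "c \<le> y" "y \<le> c + w" "0 \<le> y" using y Jc J01 by auto
        then have "a \<le> y" "y \<le> a + w" unfolding a_def by auto
        then show "y \<in> Wk k" unfolding Wk_def using k1 k2 by auto
      qed
      have kN: "k < N"
      proof -
        have "a / h \<le> 16 / w" using ax h0 w unfolding h_def by (simp add: divide_right_mono)
        then have "\<lfloor>a / h\<rfloor> \<le> \<lfloor>16 / w\<rfloor>" by (rule floor_mono)
        then show ?thesis unfolding k_def N_def by linarith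
      qed
      have "R \<le> cntr (Wk k) n d" using JR cntr_mono[OF sub, of n d] by simp
      then show "d \<in> (\<Union>k<N. S k)" using kN d unfolding S_def by auto
    qed
    define B where "B = exp (- t * R) * (1 + (exp t - 1) * p) ^ n"
    have "measure (adaptive_seq K n) (space (pts n) - G) \<le> measure (adaptive_seq K n) (\<Union>k<N. S k)"
      using cover Sm by (intro finite_measure_mono) auto
    also have "\<dots> \<le> (\<Sum>k<N. measure (adaptive_seq K n) (S k))"
      using Sm by (intro finite_measure_subadditive_finite) auto
    also have "\<dots> \<le> (\<Sum>k<N. B)" unfolding B_def by (intro sum_mono tl)
    also have "\<dots> = real N * B" by simp
    also have "\<dots> \<le> \<delta>"
    proof -
      have e0: "exp t - 1 \<ge> 0" using t0 by simp
      have "(1 + (exp t - 1) * p) ^ n \<le> exp ((exp t - 1) * p) ^ n"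
        using e0 p0 by (intro power_mono) auto
      also have "\<dots> = exp (real n * ((exp t - 1) * p))" by (simp add: exp_of_nat_mult)
      also have "real n * ((exp t - 1) * p) = (exp t - 1) * (17/16) * (real n * w / \<sigma>)"
        unfolding p_def h_def by (simp add: field_simps)
      finally have B0: "(1 + (exp t - 1) * p) ^ n \<le> exp ((exp t - 1) * (17/16) * (real n * w / \<sigma>))" .
      have B1: "B \<le> exp (- t * R + (exp t - 1) * (17/16) * (real n * w / \<sigma>))"
        unfolding B_def exp_add using B0 by (intro mult_left_mono) auto
      have N1: "real N \<le> 32 / w"
      proof -
        have "real N = real (nat \<lfloor>16 / w\<rfloor>) + 1" unfolding N_def by simp
        also have "\<dots> \<le> 16 / w + 1" using w by simp
        also have "\<dots> \<le> 32 / w" using w by (simp add: field_simps)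
        finally show ?thesis .
      qed
      have "real N * B \<le> (32 / w) * exp (- t * R + (exp t - 1) * (17/16) * (real n * w / \<sigma>))"
      proof -
        have e0': "0 \<le> 1 + (exp t - 1) * p" using e0 p0 by simp
        have "B \<ge> 0" unfolding B_def using e0' by simp
        then show ?thesis using N1 B1 w by (intro mult_mono) auto
      qed
      also have "\<dots> = exp (ln (32 / w) - t * R + (exp t - 1) * (17/16) * (real n * w / \<sigma>))"
      proof -
        have "exp (ln (32 / w) - t * R + (exp t - 1) * (17/16) * (real n * w / \<sigma>))
            = exp (ln (32 / w)) * exp (- t * R + (exp t - 1) * (17/16) * (real n * w / \<sigma>))"
          by (simp only: exp_add[symmetric]) (simp add: algebra_simps)
        also have "exp (ln (32 / w)) = 32 / w" using w by simp
        finally show ?thesis by simp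
      qed
      also have "\<dots> \<le> exp (ln \<delta>)" using tb by simp
      also have "\<dots> = \<delta>" using dl by simp
      finally show ?thesis .
    qed
    finally show ?thesis .
  qed
  have "measure (adaptive_seq K n) (space (pts n) - G) = 1 - measure (adaptive_seq K n) G"
    using prob_compl[of G] Gm P(2) sp by simp
  then show ?thesis using bad seteq n_def by simp
qed


end
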